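(* Let $(G,R,\omega)$ be a metric RPP instance and let $c$ be the number of connected components of $G\langle R\rangle$. For every edge-minimizing Eulerian extension $S$, at most $2c-2$ vertices that are balanced in $G\langle R\rangle$ are incident to edges of $S$. The bound is tight: for every $c\ge 1$ there is a metric RPP instance with $c$ components and an edge-minimizing Eulerian extension $S$ such that exactly $2c-2$ balanced vertices of $G\langle R\rangle$ are incident to edges of $S$.
   Context: An RPP instance is a triple $(G,R,\omega)$, where $G=(V,E)$ is an undirected multigraph, $\omega\colon E\to\mathbb{N}$ assigns weights (parallel edges have equal weight), and $R$ is a nonempty multiset of edges of $G$. The instance is metric if $G$ contains an edge between any two vertices and the weights satisfy the triangle inequality $\omega(\{u,w\})\le\omega(\{u,v\})+\omega(\{v,w\})$ for all $u,v,w\in V$. For a multiset $X$ of edges: - $\omega(X)$ and $|X|$ are the weight and cardinality counted with multiplicity; - $V(X)$ is the set of vertices incident to edges of $X$; - $G\langle X\rangle=(V(X),X)$ is the multigraph formed by $X$ (no isolated vertices); - $\uplus$ denotes multiset sum. A vertex is balanced in a multigraph if its degree is even (a loop counts 2), and imbalanced otherwise. A multigraph without isolated vertices is Eulerian if it is connected and all vertices are balanced. An Eulerian extension for $(G,R,\omega)$ is a multiset $S$ of edges of $G$ such that $G\langle R\uplus S\rangle$ is Eulerian. It is edge-minimizing if there is no Eulerian extension $S'$ with $|S'|<|S|$ and $\omega(S')\le\omega(S)$. *)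

theory Defs
  imports Main "HOL-Library.Multiset" "HOL-Library.Uprod"
begin

text \<open>Edges are unordered pairs of vertices (loops allowed, Upair v v).
  Since parallel edges have equal weight and R, S are multisets, an undirected
  multigraph G = (V,E) is represented by its vertex set V and the set E of
  vertex pairs joined by at least one edge; the weight is a function on pairs.\<close>

definition is_rpp :: "'v set \<Rightarrow> 'v uprod set \<Rightarrow> 'v uprod multiset \<Rightarrow> bool" where
  "is_rpp V E R \<longleftrightarrow> finite V \<and> (\<forall>e\<in>E. set_uprod e \<subseteq> V) \<and> R \<noteq> {#} \<and> set_mset R \<subseteq> E"

definition is_metric :: "'v set \<Rightarrow> 'v uprod set \<Rightarrow> ('v uprod \<Rightarrow> nat) \<Rightarrow> bool" where
  "is_metric V E \<omega> \<longleftrightarrow>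
     (\<forall>u\<in>V. \<forall>v\<in>V. u \<noteq> v \<longrightarrow> Upair u v \<in> E) \<and>
     (\<forall>u\<in>V. \<forall>v\<in>V. \<forall>w\<in>V. Upair u w \<in> E \<and> Upair u v \<in> E \<and> Upair v w \<in> E \<longrightarrow>
        \<omega> (Upair u w) \<le> \<omega> (Upair u v) + \<omega> (Upair v w))"

definition verts :: "'v uprod multiset \<Rightarrow> 'v set" where
  "verts X = (\<Union>e\<in>set_mset X. set_uprod e)"

definition wt :: "('v uprod \<Rightarrow> nat) \<Rightarrow> 'v uprod multiset \<Rightarrow> nat" where
  "wt \<omega> X = (\<Sum>e\<in>#X. \<omega> e)"

definition deg :: "'v uprod multiset \<Rightarrow> 'v \<Rightarrow> nat" where
  "deg X v = (\<Sum>e\<in>#X. if e = Upair v v then 2 else if v \<in> set_uprod e then 1 else 0)"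

definition balanced :: "'v uprod multiset \<Rightarrow> 'v \<Rightarrow> bool" where
  "balanced X v \<longleftrightarrow> even (deg X v)"

definition adj :: "'v uprod multiset \<Rightarrow> ('v \<times> 'v) set" where
  "adj X = {(u, w). Upair u w \<in># X}"

definition connected_ms :: "'v uprod multiset \<Rightarrow> bool" where
  "connected_ms X \<longleftrightarrow> (\<forall>u\<in>verts X. \<forall>w\<in>verts X. (u, w) \<in> (adj X)\<^sup>*)"

definition components :: "'v uprod multiset \<Rightarrow> 'v set set" where
  "components X = {{w. (u, w) \<in> (adj X)\<^sup>*} | u. u \<in> verts X}"

definition eulerian :: "'v uprod multiset \<Rightarrow> bool" where
  "eulerian X \<longleftrightarrow> connected_ms X \<and> (\<forall>v\<in>verts X. balanced X v)"

definition eulerian_ext :: "'v uprod set \<Rightarrow> 'v uprod multiset \<Rightarrow> 'v uprod multiset \<Rightarrow> bool" where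
  "eulerian_ext E R S \<longleftrightarrow> set_mset S \<subseteq> E \<and> eulerian (R + S)"

definition edge_min_ext ::
  "'v uprod set \<Rightarrow> ('v uprod \<Rightarrow> nat) \<Rightarrow> 'v uprod multiset \<Rightarrow> 'v uprod multiset \<Rightarrow> bool" where
  "edge_min_ext E \<omega> R S \<longleftrightarrow> eulerian_ext E R S \<and>
     \<not> (\<exists>S'. eulerian_ext E R S' \<and> size S' < size S \<and> wt \<omega> S' \<le> wt \<omega> S)"

definition bal_touched :: "'v uprod multiset \<Rightarrow> 'v uprod multiset \<Rightarrow> 'v set" where
  "bal_touched R S = {v \<in> verts R. balanced R v \<and> v \<in> verts S}"

end

theory Submission
  imports Defs
begin

definition deg1 :: "'v uprod \<Rightarrow> 'v \<Rightarrow> nat" where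
  "deg1 e v = (if e = Upair v v then 2 else if v \<in> set_uprod e then 1 else 0)"

lemma deg_empty[simp]: "deg {#} v = 0" by (simp add: deg_def)
lemma deg_add_mset[simp]: "deg (add_mset e X) v = deg1 e v + deg X v"
  by (simp add: deg_def deg1_def)
lemma deg_plus[simp]: "deg (X + Y) v = deg X v + deg Y v"
  by (simp add: deg_def)

lemma deg1_nonloop: "a \<noteq> b \<Longrightarrow> deg1 (Upair a b) y = (if y = a then 1 else 0) + (if y = b then 1 else 0)"
  by (auto simp: deg1_def)
lemma deg1_loop: "deg1 (Upair a a) y = (if y = a then 2 else 0)"
  by (auto simp: deg1_def)
lemma deg1_pos: "deg1 e v > 0 \<longleftrightarrow> v \<in> set_uprod e"
  by (auto simp: deg1_def)

lemma verts_empty[simp]: "verts {#} = {}" by (simp add: verts_def)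
lemma verts_add_mset[simp]: "verts (add_mset e X) = set_uprod e \<union> verts X"
  by (simp add: verts_def)
lemma verts_plus[simp]: "verts (X + Y) = verts X \<union> verts Y"
  by (simp add: verts_def)
lemma finite_verts[simp]: "finite (verts X)"
  by (simp add: verts_def)
lemma verts_mono: "X \<subseteq># Y \<Longrightarrow> verts X \<subseteq> verts Y"
  by (auto simp: verts_def dest: mset_subset_eqD)
lemma in_verts: "v \<in> verts X \<longleftrightarrow> (\<exists>e\<in>#X. v \<in> set_uprod e)"
  by (simp add: verts_def)

lemma deg_pos_iff: "deg X v > 0 \<longleftrightarrow> v \<in> verts X"
  by (induction X) (auto simp: deg1_pos)

lemma deg_diff: "X \<subseteq># Y \<Longrightarrow> deg (Y - X) v = deg Y v - deg X v"
proof -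
  assume "X \<subseteq># Y"
  then have "Y = (Y - X) + X" by simp
  then have "deg Y v = deg (Y - X) v + deg X v" by (metis deg_plus)
  then show ?thesis by simp
qed

lemma get_edge: "v \<in> verts X \<Longrightarrow> \<exists>w. Upair v w \<in># X"
proof -
  assume "v \<in> verts X"
  then obtain e where e: "e \<in># X" "v \<in> set_uprod e" by (auto simp: in_verts)
  obtain a b where "e = Upair a b" by (cases e)
  with e show ?thesis by (metis Upair_inject insert_iff set_uprod_simps singletonD)
qed

lemma Upair_comm: "Upair a b = Upair b a" by simp
lemma adj_iff: "(a, b) \<in> adj X \<longleftrightarrow> Upair a b \<in># X" by (simp add: adj_def)

lemma adj_sym: "(a, b) \<in> adj X \<Longrightarrow> (b, a) \<in> adj X"
  by (simp add: adj_def) (metis Upair_inject)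
lemma sym_adj: "sym (adj X)"
  by (meson adj_sym symI)
lemma rtr_sym: "(a, b) \<in> (adj X)\<^sup>* \<Longrightarrow> (b, a) \<in> (adj X)\<^sup>*"
  by (meson sym_adj sym_rtrancl symD)
lemma adj_verts: "(a, b) \<in> adj X \<Longrightarrow> a \<in> verts X \<and> b \<in> verts X"
  unfolding adj_def in_verts by force
lemma rtr_verts: "(a, b) \<in> (adj X)\<^sup>* \<Longrightarrow> a \<in> verts X \<Longrightarrow> b \<in> verts X"
  by (induction rule: rtrancl_induct) (auto dest: adj_verts)
lemma adj_mono: "X \<subseteq># Y \<Longrightarrow> adj X \<subseteq> adj Y"
  by (auto simp: adj_def dest: mset_subset_eqD)

definition adjx :: "'v uprod multiset \<Rightarrow> 'v \<Rightarrow> ('v \<times> 'v) set" where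
  "adjx X x = {(a, b). Upair a b \<in># X \<and> a \<noteq> x \<and> b \<noteq> x}"

lemma adjx_sub: "adjx X x \<subseteq> adj X" by (auto simp: adjx_def adj_def)
lemma adjx_mono: "X \<subseteq># Y \<Longrightarrow> adjx X x \<subseteq> adjx Y x"
  by (auto simp: adjx_def dest: mset_subset_eqD)

lemma first_hit:
  assumes "(y, x) \<in> (adj X)\<^sup>*" "y \<noteq> x"
  shows "\<exists>z. (y, z) \<in> (adjx X x)\<^sup>* \<and> Upair z x \<in># X"
  using assms
proof (induction rule: converse_rtrancl_induct)
  case base
  then show ?case by simp
next
  case (step y y1)
  show ?case
  proof (cases "y1 = x")
    case True
    then show ?thesis using step by (auto simp: adj_def)
  next
    case False
    then obtain z where z: "(y1, z) \<in> (adjx X x)\<^sup>*" "Upair z x \<in># X" using step by blast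
    have "(y, y1) \<in> adjx X x" using step False by (auto simp: adj_def adjx_def)
    with z show ?thesis by (meson converse_rtrancl_into_rtrancl)
  qed
qed

lemma connected_via:
  assumes "\<And>y. y \<in> verts X \<Longrightarrow> (y, r) \<in> (adj X)\<^sup>*"
  shows "connected_ms X"
  unfolding connected_ms_def
  by (meson assms rtr_sym rtrancl_trans)

definition crossing :: "'v set \<Rightarrow> 'v uprod \<Rightarrow> bool" where
  "crossing K e \<longleftrightarrow> (\<exists>a\<in>set_uprod e. a \<in> K) \<and> (\<exists>b\<in>set_uprod e. b \<notin> K)"

lemma sum_deg1_mod:
  assumes "finite K"
  shows "(\<Sum>y\<in>K. deg1 e y) mod 2 = (if crossing K e then 1 else 0)"
proof -
  obtain a b where e: "e = Upair a b" by (cases e)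
  show ?thesis
  proof (cases "a = b")
    case True
    have "(\<Sum>y\<in>K. deg1 e y) = (\<Sum>y\<in>K. if y = a then 2 else 0)"
      using True e by (simp add: deg1_loop)
    also have "\<dots> = (if a \<in> K then 2 else 0)" using assms by (simp add: sum.delta)
    finally have "(\<Sum>y\<in>K. deg1 e y) = (if a \<in> K then 2 else 0)" .
    moreover have "\<not> crossing K e" using True e by (simp add: crossing_def)
    ultimately show ?thesis by simp
  next
    case False
    have "(\<Sum>y\<in>K. deg1 e y) = (\<Sum>y\<in>K. (if y = a then 1 else 0) + (if y = b then 1 else 0))"
      using False e by (simp add: deg1_nonloop)
    also have "\<dots> = (\<Sum>y\<in>K. (if y = a then 1 else 0)) + (\<Sum>y\<in>K. (if y = b then 1 else 0))"
      by (rule sum.distrib)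
    also have "\<dots> = (if a \<in> K then 1 else 0) + (if b \<in> K then 1 else 0)"
      using assms by (simp only: sum.delta)
    finally have eq: "(\<Sum>y\<in>K. deg1 e y) = (if a \<in> K then 1 else 0) + (if b \<in> K then 1 else 0)" .
    have cr: "crossing K e \<longleftrightarrow> (a \<in> K) \<noteq> (b \<in> K)" using e by (auto simp: crossing_def)
    show ?thesis unfolding eq cr by auto
  qed
qed

lemma parity:
  assumes "finite K"
  shows "(\<Sum>y\<in>K. deg X y) mod 2 = size (filter_mset (crossing K) X) mod 2"
proof (induction X)
  case empty
  then show ?case by simp
next
  case (add e X)
  define A where "A = (\<Sum>y\<in>K. deg1 e y)"
  define B where "B = (\<Sum>y\<in>K. deg X y)"
  define c where "c = (if crossing K e then 1 else 0::nat)"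
  have 1: "(\<Sum>y\<in>K. deg (add_mset e X) y) = A + B"
    unfolding A_def B_def by (simp add: sum.distrib)
  have 2: "size (filter_mset (crossing K) (add_mset e X)) = c + size (filter_mset (crossing K) X)"
    unfolding c_def by simp
  have 3: "A mod 2 = c" unfolding A_def c_def using sum_deg1_mod[OF assms] .
  have "(A + B) mod 2 = (A mod 2 + B mod 2) mod 2" by (simp add: mod_add_eq)
  also have "\<dots> = (c + size (filter_mset (crossing K) X) mod 2) mod 2"
    using 3 add.IH unfolding B_def by simp
  also have "\<dots> = (c + size (filter_mset (crossing K) X)) mod 2" by (simp add: mod_add_right_eq)
  finally show ?case using 1 2 by simp
qed

lemma wt_plus[simp]: "wt \<omega> (X + Y) = wt \<omega> X + wt \<omega> Y" by (simp add: wt_def)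
lemma wt_add_mset[simp]: "wt \<omega> (add_mset e X) = \<omega> e + wt \<omega> X" by (simp add: wt_def)
lemma wt_empty[simp]: "wt \<omega> {#} = 0" by (simp add: wt_def)

definition splitP :: "'v \<Rightarrow> 'v \<Rightarrow> 'v \<Rightarrow> 'v uprod multiset" where
  "splitP v u w = {#Upair v u, Upair v w#}"
definition splitN :: "'v \<Rightarrow> 'v \<Rightarrow> 'v uprod multiset" where
  "splitN u w = (if u = w then {#} else {#Upair u w#})"

lemma adjx_sub_split:
  assumes "H' = H - splitP v u w + splitN u w"
  shows "adjx H v \<subseteq> adj H'"
proof
  fix p assume "p \<in> adjx H v"
  then obtain a b where p: "p = (a,b)" "Upair a b \<in># H" "a \<noteq> v" "b \<noteq> v" by (auto simp: adjx_def)
  have "count (splitP v u w) (Upair a b) = 0" using p by (auto simp: splitP_def)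
  then have "Upair a b \<in># H - splitP v u w" using p by (simp add: in_diff_count)
  then show "p \<in> adj H'" using p assms by (auto simp: adj_def)
qed

lemma verts_split:
  assumes sub: "splitP v u w \<subseteq># H" and H': "H' = H - splitP v u w + splitN u w"
  shows "verts H' \<subseteq> verts H"
proof -
  have "verts H' = verts (H - splitP v u w) \<union> verts (splitN u w)" using H' by simp
  moreover have "verts (H - splitP v u w) \<subseteq> verts H" by (rule verts_mono) simp
  moreover have "verts (splitN u w) \<subseteq> verts H" using verts_mono[OF sub] by (auto simp: splitN_def splitP_def)
  ultimately show ?thesis by blast
qed

lemma conn_split:
  assumes conn: "connected_ms H"
  and sub: "splitP v u w \<subseteq># H" and uv: "u \<noteq> v" "w \<noteq> v"
  and H': "H' = H - splitP v u w + splitN u w"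
  and att: "Upair v z \<in># H'" "(u, z) \<in> (adjx H v)\<^sup>*"
  shows "connected_ms H'"
proof (rule connected_via[where r = v])
  have sub1: "adjx H v \<subseteq> adj H'" using adjx_sub_split[OF H'] .
  have uv_reach: "(u, v) \<in> (adj H')\<^sup>*"
  proof -
    have "(u,z) \<in> (adj H')\<^sup>*" using att(2) sub1 rtrancl_mono by blast
    moreover have "(z, v) \<in> adj H'" using att(1) by (metis adj_iff Upair_comm)
    ultimately show ?thesis by simp
  qed
  have wv_reach: "(w, v) \<in> (adj H')\<^sup>*"
  proof (cases "u = w")
    case True with uv_reach show ?thesis by simp
  next
    case False
    then have "Upair u w \<in># H'" using H' by (simp add: splitN_def)
    then have "(w,u) \<in> adj H'" by (metis adj_iff Upair_comm)
    with uv_reach show ?thesis by (meson converse_rtrancl_into_rtrancl)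
  qed
  fix y assume y: "y \<in> verts H'"
  have vH: "verts H' \<subseteq> verts H" by (rule verts_split[OF sub H'])
  show "(y, v) \<in> (adj H')\<^sup>*"
  proof (cases "y = v")
    case True then show ?thesis by simp
  next
    case False
    have "v \<in> verts H" using verts_mono[OF sub] by (auto simp: splitP_def)
    then have "(y, v) \<in> (adj H)\<^sup>*" using conn y vH by (auto simp: connected_ms_def)
    from first_hit[OF this False] obtain z0 where z0: "(y,z0) \<in> (adjx H v)\<^sup>*" "Upair z0 v \<in># H" by blast
    have yz0: "(y, z0) \<in> (adj H')\<^sup>*" using z0(1) sub1 rtrancl_mono by blast
    have "(z0, v) \<in> (adj H')\<^sup>*"
    proof (cases "z0 = u \<or> z0 = w")
      case True with uv_reach wv_reach show ?thesis by blast
    next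
      case False
      then have "count (splitP v u w) (Upair z0 v) = 0" using uv by (auto simp: splitP_def)
      then have "Upair z0 v \<in># H - splitP v u w" using z0(2) by (simp add: in_diff_count)
      then have "Upair z0 v \<in># H'" using H' by simp
      then show ?thesis by (auto simp: adj_def)
    qed
    with yz0 show ?thesis by (rule rtrancl_trans)
  qed
qed

lemma conn_split0:
  assumes conn: "connected_ms H"
  and sub: "splitP x u w \<subseteq># H" and uv: "u \<noteq> x" "w \<noteq> x"
  and H': "H' = H - splitP x u w + splitN u w"
  and noedge: "\<And>z. Upair x z \<notin># H - splitP x u w"
  shows "connected_ms H'"
proof (rule connected_via[where r = u])
  have sub1: "adjx H x \<subseteq> adj H'" using adjx_sub_split[OF H'] .
  have wu: "(w, u) \<in> (adj H')\<^sup>*"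
  proof (cases "u = w")
    case True then show ?thesis by simp
  next
    case False
    then have "Upair u w \<in># H'" using H' by (simp add: splitN_def)
    then have "(w,u) \<in> adj H'" by (metis adj_iff Upair_comm)
    then show ?thesis by simp
  qed
  fix y assume y: "y \<in> verts H'"
  have vH: "verts H' \<subseteq> verts H" by (rule verts_split[OF sub H'])
  have xnot: "x \<notin> verts H'"
  proof
    assume "x \<in> verts H'"
    then have "x \<in> verts (H - splitP x u w) \<or> x \<in> verts (splitN u w)" using H' by simp
    then show False
    proof
      assume "x \<in> verts (H - splitP x u w)"
      then show False using get_edge noedge by metis
    next
      assume "x \<in> verts (splitN u w)"
      then show False using uv by (auto simp: splitN_def split: if_splits)
    qed
  qed
  then have yx: "y \<noteq> x" using y by blast
  have "x \<in> verts H" using verts_mono[OF sub] by (auto simp: splitP_def)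
  then have "(y, x) \<in> (adj H)\<^sup>*" using conn y vH by (auto simp: connected_ms_def)
  from first_hit[OF this yx] obtain z0 where z0: "(y,z0) \<in> (adjx H x)\<^sup>*" "Upair z0 x \<in># H" by blast
  have yz0: "(y, z0) \<in> (adj H')\<^sup>*" using z0(1) sub1 rtrancl_mono by blast
  have "z0 = u \<or> z0 = w"
  proof (rule ccontr)
    assume "\<not> (z0 = u \<or> z0 = w)"
    then have "count (splitP x u w) (Upair z0 x) = 0" using uv by (auto simp: splitP_def)
    then have "Upair z0 x \<in># H - splitP x u w" using z0(2) by (simp add: in_diff_count)
    then have "Upair x z0 \<in># H - splitP x u w" by (metis Upair_inject)
    then show False using noedge by blast
  qed
  then show "(y, u) \<in> (adj H')\<^sup>*" using yz0 wu by (meson rtrancl_trans)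
qed

lemma split_assoc:
  assumes "P \<subseteq># S"
  shows "R + (S - P + N) = R + S - P + N"
  unfolding multiset_eq_iff
proof
  fix a
  have "count P a \<le> count S a" using assms by (simp add: subseteq_mset_def)
  then show "count (R + (S - P + N)) a = count (R + S - P + N) a" by simp
qed

lemma deg_splitP_N_even:
  assumes "u \<noteq> v" "w \<noteq> v"
  shows "even (deg (splitP v u w) y + deg (splitN u w) y)"
  using assms by (auto simp: splitP_def splitN_def deg1_nonloop)

lemma adjx_rtr_ne: "(a, b) \<in> (adjx X x)\<^sup>* \<Longrightarrow> a \<noteq> x \<Longrightarrow> b \<noteq> x"
  by (induction rule: rtrancl_induct) (auto simp: adjx_def)

lemma adjx_rtr_verts: "(a, b) \<in> (adjx X x)\<^sup>* \<Longrightarrow> b \<in> insert a (verts X)"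
proof (induction rule: rtrancl_induct)
  case base then show ?case by simp
next
  case (step y z)
  then have "(y, z) \<in> adj X" using adjx_sub[of X x] by blast
  then show ?case using adj_verts[of y z X] by blast
qed

locale ms =
  fixes V :: "'v set" and E :: "'v uprod set" and \<omega> :: "'v uprod \<Rightarrow> nat"
    and R S :: "'v uprod multiset"
  assumes rpp: "is_rpp V E R" and met: "is_metric V E \<omega>" and emin: "edge_min_ext E \<omega> R S"
begin

lemma S_E: "set_mset S \<subseteq> E" using emin by (simp add: edge_min_ext_def eulerian_ext_def)
lemma H_eul: "eulerian (R + S)" using emin by (simp add: edge_min_ext_def eulerian_ext_def)
lemma H_conn: "connected_ms (R + S)" using H_eul by (simp add: eulerian_def)
lemma H_even: "even (deg (R + S) y)"
proof (cases "y \<in> verts (R + S)")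
  case True then show ?thesis using H_eul by (simp add: eulerian_def balanced_def)
next
  case False then have "deg (R + S) y = 0" by (simp add: deg_pos_iff[symmetric])
  then show ?thesis by simp
qed
lemma E_V: "e \<in> E \<Longrightarrow> set_uprod e \<subseteq> V" using rpp by (simp add: is_rpp_def)

lemma no_better:
  assumes "set_mset S' \<subseteq> E" "size S' < size S" "wt \<omega> S' \<le> wt \<omega> S" "eulerian (R + S')"
  shows False
  using emin assms by (auto simp: edge_min_ext_def eulerian_ext_def)

lemma loopless: "Upair x x \<notin># S"
proof
  assume l: "Upair x x \<in># S"
  define S' where "S' = S - {#Upair x x#}"
  have SS: "S = add_mset (Upair x x) S'" using l by (simp add: S'_def)
  have "set_mset S' \<subseteq> E" using S_E by (auto simp: S'_def dest: in_diffD)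
  moreover have "size S' < size S" using SS by (metis lessI size_add_mset)
  moreover have "wt \<omega> S' \<le> wt \<omega> S" using SS by simp
  moreover have "eulerian (R + S')"
  proof -
    have even: "even (deg (R + S') y)" for y
      using H_even[of y] SS by (auto simp: deg1_loop split: if_splits)
    have "adj (R + S) - Id \<subseteq> adj (R + S')"
    proof
      fix p assume "p \<in> adj (R + S) - Id"
      then obtain a b where p: "p = (a, b)" "a \<noteq> b" "Upair a b \<in># R + S" by (auto simp: adj_def)
      then have "Upair a b \<noteq> Upair x x" by auto
      then have "Upair a b \<in># R + S'" using p(3) SS by auto
      then show "p \<in> adj (R + S')" using p by (simp add: adj_def)
    qed
    then have "(adj (R + S))\<^sup>* \<subseteq> (adj (R + S'))\<^sup>*" by (metis rtrancl_mono rtrancl_r_diff_Id)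
    moreover have "verts (R + S') \<subseteq> verts (R + S)" using SS by auto
    ultimately have "connected_ms (R + S')" using H_conn unfolding connected_ms_def by blast
    then show ?thesis using even by (simp add: eulerian_def balanced_def)
  qed
  ultimately show False by (rule no_better)
qed

lemma split_conn_false:
  assumes e1: "Upair v u \<in># S" and e2: "Upair v w \<in># S - {#Upair v u#}"
    and uv: "u \<noteq> v" "w \<noteq> v"
    and conn: "connected_ms (R + S - splitP v u w + splitN u w)"
  shows False
proof -
  have sub: "splitP v u w \<subseteq># S" using e1 e2 by (simp add: splitP_def insert_subset_eq_iff)
  have e2S: "Upair v w \<in># S" using e2 by (meson in_diffD)
  define S' where "S' = S - splitP v u w + splitN u w"
  have RS': "R + S' = R + S - splitP v u w + splitN u w" using split_assoc[OF sub] S'_def by simp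
  have eq: "S' + splitP v u w = S + splitN u w"
    using sub unfolding S'_def by (metis add.assoc add.commute subset_mset.diff_add)
  have uV: "u \<in> V" "v \<in> V" using E_V[of "Upair v u"] S_E e1 by auto
  have wV: "w \<in> V" using E_V[of "Upair v w"] S_E e2S by auto
  have "set_mset S' \<subseteq> E"
  proof -
    have "set_mset (S - splitP v u w) \<subseteq> E" using S_E by (meson in_diffD subset_iff)
    moreover have "set_mset (splitN u w) \<subseteq> E"
      using met uV wV by (auto simp: splitN_def is_metric_def)
    ultimately show ?thesis by (auto simp: S'_def)
  qed
  moreover have "size S' < size S"
  proof -
    have "size S' + 2 = size S + size (splitN u w)" using arg_cong[OF eq, of size]
      by (simp add: splitP_def)
    moreover have "size (splitN u w) \<le> 1" by (simp add: splitN_def)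
    ultimately show ?thesis by simp
  qed
  moreover have "wt \<omega> S' \<le> wt \<omega> S"
  proof -
    have "wt \<omega> S' + (\<omega> (Upair v u) + \<omega> (Upair v w)) = wt \<omega> S + wt \<omega> (splitN u w)"
      using arg_cong[OF eq, of "wt \<omega>"] by (simp add: splitP_def)
    moreover have "wt \<omega> (splitN u w) \<le> \<omega> (Upair v u) + \<omega> (Upair v w)"
    proof (cases "u = w")
      case True then show ?thesis by (simp add: splitN_def)
    next
      case False
      have "Upair u w \<in> E" using met uV wV False by (simp add: is_metric_def)
      moreover have "Upair u v \<in> E" "Upair v w \<in> E" using S_E e1 e2S by (auto simp: Upair_comm)
      ultimately have "\<omega> (Upair u w) \<le> \<omega> (Upair u v) + \<omega> (Upair v w)"
        using met uV wV unfolding is_metric_def by blast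
      then show ?thesis using False by (simp add: splitN_def Upair_comm)
    qed
    ultimately show ?thesis by simp
  qed
  moreover have "eulerian (R + S')"
  proof -
    have "deg (R + S') y + deg (splitP v u w) y = deg (R + S) y + deg (splitN u w) y" for y
      using arg_cong[OF eq, of "\<lambda>X. deg X y"] by simp
    then have "even (deg (R + S') y)" for y
      using H_even[of y] deg_splitP_N_even[OF uv, of y] by (metis even_add)
    then show ?thesis using conn RS' by (simp add: eulerian_def balanced_def)
  qed
  ultimately show False by (rule no_better)
qed

lemma second_edge:
  assumes "v \<in> verts S" "even (deg S v)" "Upair v u \<in># S"
  shows "\<exists>w. Upair v w \<in># S - {#Upair v u#} \<and> w \<noteq> v"
proof -
  have uv: "u \<noteq> v" using assms(3) loopless by auto
  have "deg S v > 0" using assms(1) by (simp add: deg_pos_iff)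
  moreover have "deg S v \<noteq> 1" using assms(2) by auto
  ultimately have "deg S v \<ge> 2" by linarith
  moreover have "deg (S - {#Upair v u#}) v = deg S v - 1"
    using assms(3) uv by (simp add: deg_diff deg1_nonloop)
  ultimately have "deg (S - {#Upair v u#}) v > 0" by simp
  then have "v \<in> verts (S - {#Upair v u#})" by (simp add: deg_pos_iff)
  then obtain w where w: "Upair v w \<in># S - {#Upair v u#}" using get_edge[of v] by blast
  have "w \<noteq> v"
  proof
    assume "w = v"
    then have "Upair v v \<in># S" using w by (meson in_diffD)
    then show False using loopless by blast
  qed
  with w show ?thesis by blast
qed

lemma even_S_of_R:
  assumes "even (deg R v)" shows "even (deg S v)"
  using H_even[of v] assms by simp

end

definition compR :: "'v uprod multiset \<Rightarrow> 'v \<Rightarrow> 'v set" where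
  "compR X a = {w. (a, w) \<in> (adj X)\<^sup>*}"

context ms begin

lemma T_lemma:
  assumes T: "v \<in> bal_touched R S" and e1: "Upair v u \<in># S"
  shows "{y. (u, y) \<in> (adjx (R + S) v)\<^sup>*} \<inter> compR R v = {}"
proof (rule ccontr)
  assume "{y. (u, y) \<in> (adjx (R + S) v)\<^sup>*} \<inter> compR R v \<noteq> {}"
  then obtain z where z: "(u, z) \<in> (adjx (R + S) v)\<^sup>*" "(v, z) \<in> (adj R)\<^sup>*"
    by (auto simp: compR_def)
  have uv: "u \<noteq> v" using e1 loopless by auto
  have zv: "z \<noteq> v" using adjx_rtr_ne[OF z(1) uv] .
  from first_hit[OF rtr_sym[OF z(2)] zv] obtain y0 where
    y0: "(z, y0) \<in> (adjx R v)\<^sup>*" "Upair y0 v \<in># R" by blast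
  have "(z, y0) \<in> (adjx (R + S) v)\<^sup>*" using y0(1) adjx_mono[of R "R + S" v] rtrancl_mono by auto
  with z(1) have uy0: "(u, y0) \<in> (adjx (R + S) v)\<^sup>*" by simp
  have Tv: "v \<in> verts S" "even (deg R v)" using T by (auto simp: bal_touched_def balanced_def)
  obtain w where w: "Upair v w \<in># S - {#Upair v u#}" "w \<noteq> v"
    using second_edge[OF Tv(1) even_S_of_R[OF Tv(2)] e1] by blast
  have sub: "splitP v u w \<subseteq># S" using e1 w by (simp add: splitP_def insert_subset_eq_iff)
  have "Upair v y0 \<in># R" using y0(2) by (metis Upair_comm)
  then have "Upair v y0 \<in># R + (S - splitP v u w + splitN u w)" by simp
  then have att: "Upair v y0 \<in># R + S - splitP v u w + splitN u w" using split_assoc[OF sub] by simp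
  have subH: "splitP v u w \<subseteq># R + S" using sub by (simp add: subset_mset.add_increasing)
  have "connected_ms (R + S - splitP v u w + splitN u w)"
    by (rule conn_split[OF H_conn subH uv w(2) refl att uy0])
  then show False using split_conn_false[OF e1 w(1) uv w(2)] by blast
qed

end

lemma K_finite: "finite {y. (u, y) \<in> (adjx X x)\<^sup>*}"
proof -
  have "{y. (u, y) \<in> (adjx X x)\<^sup>*} \<subseteq> insert u (verts X)"
  proof
    fix y assume "y \<in> {y. (u, y) \<in> (adjx X x)\<^sup>*}"
    then show "y \<in> insert u (verts X)" using adjx_rtr_verts[of u y X x] by simp
  qed
  then show ?thesis by (rule finite_subset) simp
qed

lemma sum_even: "(\<And>y. even (f y)) \<Longrightarrow> even (sum f (K::'a set))"
  by (rule dvd_sum) simp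

context ms begin

lemma S_only_false:
  assumes xS: "x \<in> verts S" and xR: "x \<notin> verts R"
  shows False
proof -
  have dR: "deg R x = 0" using xR by (simp add: deg_pos_iff[symmetric])
  have evS: "even (deg S x)" using H_even[of x] dR by simp
  obtain u where e1: "Upair x u \<in># S" using get_edge[OF xS] by blast
  have ux: "u \<noteq> x" using e1 loopless by auto
  have noR: "Upair x z \<notin># R" for z
  proof
    assume "Upair x z \<in># R"
    then have "x \<in> verts R" unfolding in_verts by force
    then show False using xR by simp
  qed
  obtain w where w: "Upair x w \<in># S - {#Upair x u#}" "w \<noteq> x"
    using second_edge[OF xS evS e1] by blast
  have sub: "splitP x u w \<subseteq># S" using e1 w by (simp add: splitP_def insert_subset_eq_iff)
  have subH: "splitP x u w \<subseteq># R + S" using sub by (simp add: subset_mset.add_increasing)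
  have degP: "deg (splitP x u w) x = 2" using ux w(2) by (simp add: splitP_def deg1_nonloop)
  have degH: "deg (R + S) x = deg S x" using dR by simp
  have "deg (S - splitP x u w) x = deg S x - 2" using deg_diff[OF sub] degP by simp
  have ge2: "deg S x \<ge> 2"
  proof -
    have "S = (S - splitP x u w) + splitP x u w" using sub by simp
    then have "deg S x = deg (S - splitP x u w) x + 2" using degP by (metis deg_plus)
    then show ?thesis by simp
  qed
  show False
  proof (cases "deg S x = 2")
    case True
    have noedge: "Upair x z \<notin># R + S - splitP x u w" for z
    proof
      assume "Upair x z \<in># R + S - splitP x u w"
      then have "x \<in> verts (R + S - splitP x u w)" unfolding in_verts by force
      then have "deg (R + S - splitP x u w) x > 0" by (simp add: deg_pos_iff)
      moreover have "deg (R + S - splitP x u w) x = 0" using deg_diff[OF subH] degP degH True by simp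
      ultimately show False by simp
    qed
    have "connected_ms (R + S - splitP x u w + splitN u w)"
      by (rule conn_split0[OF H_conn subH ux w(2) refl noedge])
    then show False using split_conn_false[OF e1 w(1) ux w(2)] by blast
  next
    case False
    have "deg S x \<noteq> 3" using evS by auto
    then have ge4: "deg S x \<ge> 4" using False ge2 by linarith
    define K where "K = {y. (u, y) \<in> (adjx (R + S) x)\<^sup>*}"
    have uK: "u \<in> K" by (simp add: K_def)
    have xK: "x \<notin> K" using adjx_rtr_ne[OF _ ux] by (auto simp: K_def)
    have K_closed: "b = x" if "Upair a b \<in># R + S" "a \<in> K" "b \<notin> K" for a b
    proof (rule ccontr)
      assume "b \<noteq> x"
      moreover have "a \<noteq> x" using that(2) xK by auto
      ultimately have "(a, b) \<in> adjx (R + S) x" using that(1) by (simp add: adjx_def)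
      then have "b \<in> K" using that(2) unfolding K_def by (simp add: rtrancl_into_rtrancl)
      then show False using that(3) by simp
    qed
    show False
    proof (cases "\<exists>w'. Upair x w' \<in># S \<and> w' \<notin> K")
      case True
      then obtain w' where w': "Upair x w' \<in># S" "w' \<notin> K" by blast
      have w'x: "w' \<noteq> x" using loopless w'(1) by auto
      have ne: "Upair x w' \<noteq> Upair x u" using w'(2) uK by auto
      have e2: "Upair x w' \<in># S - {#Upair x u#}" using w'(1) ne ux w'x by (auto simp: in_diff_count)
      have sub2: "splitP x u w' \<subseteq># S" using e1 e2 by (simp add: splitP_def insert_subset_eq_iff)
      have subH2: "splitP x u w' \<subseteq># R + S" using sub2 by (simp add: subset_mset.add_increasing)
      have finK: "finite K" unfolding K_def by (rule K_finite)
      define F where "F = filter_mset (crossing K) (R + S)"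
      have "even (\<Sum>y\<in>K. deg (R + S) y)" using H_even by (rule sum_even)
      then have evF: "even (size F)" using parity[OF finK, of "R + S"] unfolding F_def by (simp add: even_iff_mod_2_eq_zero)
      have e1F: "Upair x u \<in># F" using e1 uK xK by (auto simp: F_def crossing_def)
      then have "size F > 0" by (metis empty_iff set_mset_empty size_eq_0_iff_empty neq0_conv)
      then have "size F \<ge> 2" using evF by presburger
      then have "size (F - {#Upair x u#}) > 0" using e1F by (simp add: size_Diff_singleton)
      then obtain f where f: "f \<in># F - {#Upair x u#}" by (metis multiset_nonemptyE size_empty less_irrefl)
      have fcr: "crossing K f" using f by (auto simp: F_def dest: in_diffD)
      have cF: "count F f \<le> count (R + S) f" by (simp add: F_def)
      have "count {#Upair x u#} f < count F f" using f by (simp add: in_diff_count)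
      then have cnt1: "count {#Upair x u#} f < count (R + S) f" using cF by linarith
      have "count (R + S) f > 0" using cnt1 by linarith
      then have fH: "f \<in># R + S" by (simp only: count_greater_zero_iff)
      obtain z where fz: "f = Upair x z" and zK: "z \<in> K"
      proof -
        obtain p q where pq: "f = Upair p q" by (cases f)
        show ?thesis
        proof (cases "p \<in> K")
          case True
          then have "q \<notin> K" using fcr pq by (auto simp: crossing_def)
          then have "q = x" using K_closed[of p q] fH pq True by simp
          then show ?thesis using that[of p] pq True by (simp add: Upair_comm)
        next
          case False
          then have "q \<in> K" using fcr pq by (auto simp: crossing_def)
          then have "p = x" using K_closed[of q p] fH pq False by (simp add: Upair_comm)
          then show ?thesis using that[of q] pq \<open>q \<in> K\<close> by simp
        qed
      qed
      have "f \<noteq> Upair x w'" using fz zK w'(2) by auto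
      then have "count (splitP x u w') f = count {#Upair x u#} f" by (simp add: splitP_def)
      then have "f \<in># R + S - splitP x u w'" using cnt1 by (simp add: in_diff_count)
      then have att: "Upair x z \<in># R + S - splitP x u w' + splitN u w'" using fz by simp
      have uz: "(u, z) \<in> (adjx (R + S) x)\<^sup>*" using zK by (simp add: K_def)
      have "connected_ms (R + S - splitP x u w' + splitN u w')"
        by (rule conn_split[OF H_conn subH2 ux w'x refl att uz])
      then show False using split_conn_false[OF e1 e2 ux w'x] by blast
    next
      case False
      then have allK: "w' \<in> K" if "Upair x w' \<in># S" for w' using that by blast
      have "deg (R + S - splitP x u w) x \<ge> 2" using deg_diff[OF subH] degP degH ge4 by simp
      then have "x \<in> verts (R + S - splitP x u w)" by (simp add: deg_pos_iff[symmetric])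
      then obtain z where z: "Upair x z \<in># R + S - splitP x u w" using get_edge[of x] by blast
      then have "Upair x z \<in># R + S" by (meson in_diffD)
      then have "Upair x z \<in># S" using noR by auto
      then have zK: "z \<in> K" by (rule allK)
      have att: "Upair x z \<in># R + S - splitP x u w + splitN u w" using z by simp
      have uz: "(u, z) \<in> (adjx (R + S) x)\<^sup>*" using zK by (simp add: K_def)
      have "connected_ms (R + S - splitP x u w + splitN u w)"
        by (rule conn_split[OF H_conn subH ux w(2) refl att uz])
      then show False using split_conn_false[OF e1 w(1) ux w(2)] by blast
    qed
  qed
qed

lemma verts_S_R: "verts S \<subseteq> verts R" using S_only_false by blast

end

definition cc :: "'a set \<Rightarrow> ('a \<times> 'a) set \<Rightarrow> 'a \<Rightarrow> 'a set" where
  "cc M A x = {y \<in> M. (x, y) \<in> (A \<inter> M \<times> M)\<^sup>*}"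
definition ncomps :: "'a set \<Rightarrow> ('a \<times> 'a) set \<Rightarrow> 'a set set" where
  "ncomps M A = cc M A ` M"
definition conn_on :: "'a set \<Rightarrow> ('a \<times> 'a) set \<Rightarrow> bool" where
  "conn_on M A \<longleftrightarrow> (\<forall>x\<in>M. \<forall>y\<in>M. (x, y) \<in> (A \<inter> M \<times> M)\<^sup>*)"

lemma sym_on_rel: "sym A \<Longrightarrow> sym (A \<inter> M \<times> M)"
  by (auto simp: sym_def)

lemma rtr_sym_on:
  assumes "sym A" "(x, y) \<in> (A \<inter> M \<times> M)\<^sup>*"
  shows "(y, x) \<in> (A \<inter> M \<times> M)\<^sup>*"
proof -
  have "sym ((A \<inter> M \<times> M)\<^sup>*)" using sym_on_rel[OF assms(1)] by (rule sym_rtrancl)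
  then show ?thesis using assms(2) by (rule symD)
qed

lemma rtr_mono_set: "M \<subseteq> M' \<Longrightarrow> (x, y) \<in> (A \<inter> M \<times> M)\<^sup>* \<Longrightarrow> (x, y) \<in> (A \<inter> M' \<times> M')\<^sup>*"
proof -
  assume "M \<subseteq> M'"
  then have "A \<inter> M \<times> M \<subseteq> A \<inter> M' \<times> M'" by auto
  then show "(x, y) \<in> (A \<inter> M \<times> M)\<^sup>* \<Longrightarrow> (x, y) \<in> (A \<inter> M' \<times> M')\<^sup>*" using rtrancl_mono by blast
qed

lemma cc_sub: "cc M A x \<subseteq> M" by (auto simp: cc_def)
lemma cc_self: "x \<in> M \<Longrightarrow> x \<in> cc M A x" by (auto simp: cc_def)

lemma cc_eq:
  assumes "sym A" "y \<in> cc M A x"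
  shows "cc M A y = cc M A x"
proof -
  have xy: "(x, y) \<in> (A \<inter> M \<times> M)\<^sup>*" using assms by (simp add: cc_def)
  then have yx: "(y, x) \<in> (A \<inter> M \<times> M)\<^sup>*" using rtr_sym_on[OF assms(1)] by blast
  show ?thesis unfolding cc_def using xy yx by (auto intro: rtrancl_trans)
qed

lemma cc_disj:
  assumes "sym A" "cc M A x \<noteq> cc M A y"
  shows "cc M A x \<inter> cc M A y = {}"
  using cc_eq[OF assms(1)] assms(2) by blast

lemma rtr_in_cc:
  assumes "(x, y) \<in> (A \<inter> M \<times> M)\<^sup>*" "x \<in> M"
  shows "(x, y) \<in> (A \<inter> cc M A x \<times> cc M A x)\<^sup>*"
  using assms(1)
proof (induction rule: rtrancl_induct)
  case base then show ?case by simp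
next
  case (step y z)
  have "y \<in> cc M A x"
  proof (cases "y = x")
    case True then show ?thesis using assms(2) by (simp add: cc_self)
  next
    case False then show ?thesis using step(1) step(2) by (auto simp: cc_def)
  qed
  moreover have "z \<in> cc M A x" using step(1) step(2) by (auto simp: cc_def intro: rtrancl_into_rtrancl)
  ultimately have edge: "(y, z) \<in> A \<inter> cc M A x \<times> cc M A x" using step(2) by simp
  show ?case using step(3) edge by (rule rtrancl_into_rtrancl)
qed

lemma first_hit_set:
  assumes "(y, x) \<in> (A \<inter> M \<times> M)\<^sup>*" "y \<noteq> x" "y \<in> M"
  shows "\<exists>z. (y, z) \<in> (A \<inter> (M - {x}) \<times> (M - {x}))\<^sup>* \<and> (z, x) \<in> A \<and> z \<in> M - {x}"
  using assms
proof (induction rule: converse_rtrancl_induct)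
  case base then show ?case by simp
next
  case (step y y1)
  show ?case
  proof (cases "y1 = x")
    case True then show ?thesis using step by auto
  next
    case False
    have "y1 \<in> M" using step(1) by auto
    then obtain z where z: "(y1, z) \<in> (A \<inter> (M - {x}) \<times> (M - {x}))\<^sup>*" "(z, x) \<in> A" "z \<in> M - {x}"
      using step False by blast
    have "(y, y1) \<in> A \<inter> (M - {x}) \<times> (M - {x})" using step(1) step(4) step(5) False by auto
    with z show ?thesis by (meson converse_rtrancl_into_rtrancl)
  qed
qed

lemma card_image_le_factor:
  assumes "finite S" "\<And>a b. a \<in> S \<Longrightarrow> b \<in> S \<Longrightarrow> g a = g b \<Longrightarrow> h a = h b"
  shows "card (h ` S) \<le> card (g ` S)"
proof -
  define F where "F c = h (SOME a. a \<in> S \<and> g a = c)" for c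
  have "h ` S \<subseteq> F ` (g ` S)"
  proof
    fix y assume "y \<in> h ` S"
    then obtain a where a: "a \<in> S" "y = h a" by blast
    have "\<exists>a'. a' \<in> S \<and> g a' = g a" using a by blast
    then have "(SOME a'. a' \<in> S \<and> g a' = g a) \<in> S \<and> g (SOME a'. a' \<in> S \<and> g a' = g a) = g a"
      by (rule someI_ex)
    then have "F (g a) = h a" unfolding F_def using assms(2) a(1) by blast
    then show "y \<in> F ` (g ` S)" using a by (metis imageI)
  qed
  then have "card (h ` S) \<le> card (F ` (g ` S))" by (rule card_mono[rotated]) (simp add: assms(1))
  also have "\<dots> \<le> card (g ` S)" by (rule card_image_le) (simp add: assms(1))
  finally show ?thesis .
qed

lemma comp_reach_x:
  assumes conn: "conn_on N A" and symA: "sym A" and xN: "x \<in> N"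
    and z0: "z0 \<in> N - {x}" and v: "v \<in> cc (N - {x}) A z0"
  shows "(v, x) \<in> (A \<inter> insert x (cc (N - {x}) A z0) \<times> insert x (cc (N - {x}) A z0))\<^sup>*"
proof -
  let ?M = "N - {x}"
  let ?Y = "cc ?M A z0"
  let ?G = "insert x ?Y"
  have "(z0, x) \<in> (A \<inter> N \<times> N)\<^sup>*" using conn z0 xN by (auto simp: conn_on_def)
  from first_hit_set[OF this] z0 obtain z where
    z: "(z0, z) \<in> (A \<inter> ?M \<times> ?M)\<^sup>*" "(z, x) \<in> A" "z \<in> ?M" by auto
  have z0M: "z0 \<in> ?M" using z0 by simp
  have zY: "(z0, z) \<in> (A \<inter> ?Y \<times> ?Y)\<^sup>*" by (rule rtr_in_cc[OF z(1) z0M])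
  have zYmem: "z \<in> ?Y" unfolding cc_def using z(1) z(3) by blast
  have "(z0, v) \<in> (A \<inter> ?M \<times> ?M)\<^sup>*" using v by (simp add: cc_def)
  then have "(z0, v) \<in> (A \<inter> ?Y \<times> ?Y)\<^sup>*" by (rule rtr_in_cc[OF _ z0M])
  then have "(v, z0) \<in> (A \<inter> ?Y \<times> ?Y)\<^sup>*" by (rule rtr_sym_on[OF symA])
  then have "(v, z) \<in> (A \<inter> ?Y \<times> ?Y)\<^sup>*" using zY by (rule rtrancl_trans)
  then have "(v, z) \<in> (A \<inter> ?G \<times> ?G)\<^sup>*" by (rule rtr_mono_set[rotated]) auto
  moreover have "(z, x) \<in> A \<inter> ?G \<times> ?G" using z(2) zYmem by auto
  ultimately show ?thesis by (rule rtrancl_into_rtrancl)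
qed

lemma sum_cut_comps:
  assumes "finite N" "N \<noteq> {}" "conn_on N A" "sym A"
  shows "(\<Sum>x\<in>N. card (ncomps (N - {x}) A)) \<le> 2 * card N - 2"
  using assms
proof (induction "card N" arbitrary: N rule: less_induct)
  case less
  note fin = less.prems(1) and ne = less.prems(2) and conn = less.prems(3) and symA = less.prems(4)
  show ?case
  proof (cases "\<exists>x\<in>N. card (ncomps (N - {x}) A) \<ge> 2")
    case False
    then have le1: "card (ncomps (N - {x}) A) \<le> 1" if "x \<in> N" for x using that by force
    show ?thesis
    proof (cases "card N = 1")
      case True
      then obtain x where "N = {x}" using card_1_singletonE by blast
      then show ?thesis by (simp add: ncomps_def)
    next
      case False
      then have "card N \<ge> 2" using ne fin by (metis One_nat_def Suc_1 Suc_leI card_gt_0_iff le_neq_implies_less)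
      moreover have "(\<Sum>x\<in>N. card (ncomps (N - {x}) A)) \<le> (\<Sum>x\<in>N. 1)" using le1 by (rule sum_mono)
      ultimately show ?thesis by simp
    qed
  next
    case True
    then obtain x where xN: "x \<in> N" and k2: "card (ncomps (N - {x}) A) \<ge> 2" by blast
    define M where "M = N - {x}"
    define Ys where "Ys = ncomps M A"
    define f where "f y = card (ncomps (N - {y}) A)" for y
    have finM: "finite M" using fin by (simp add: M_def)
    have finYs: "finite Ys" using finM by (simp add: Ys_def ncomps_def)
    have Ys_ne: "Y \<noteq> {}" if "Y \<in> Ys" for Y using that cc_self by (fastforce simp: Ys_def ncomps_def)
    have Ys_sub: "Y \<subseteq> M" if "Y \<in> Ys" for Y using that cc_sub by (fastforce simp: Ys_def ncomps_def)
    have Ys_union: "\<Union>Ys = M" using cc_self cc_sub by (fastforce simp: Ys_def ncomps_def)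
    have Ys_disj: "Y \<inter> Y' = {}" if "Y \<in> Ys" "Y' \<in> Ys" "Y \<noteq> Y'" for Y Y'
      using that cc_disj[OF symA] by (auto simp: Ys_def ncomps_def)
    have finY: "finite Y" if "Y \<in> Ys" for Y using Ys_sub[OF that] finM finite_subset by blast
    have key: "(\<Sum>y\<in>Y. f y) + 1 \<le> 2 * card Y" if Y: "Y \<in> Ys" for Y
    proof -
      obtain z0 where z0: "z0 \<in> M" "Y = cc M A z0" using Y by (auto simp: Ys_def ncomps_def)
      define G where "G = insert x Y"
      have xY: "x \<notin> Y" using Ys_sub[OF Y] by (auto simp: M_def)
      have GN: "G \<subseteq> N" using Ys_sub[OF Y] xN by (auto simp: G_def M_def)
      have reach: "(v, x) \<in> (A \<inter> G \<times> G)\<^sup>*" if "v \<in> Y" for v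
        using comp_reach_x[OF conn symA xN, of z0 v] z0 that by (simp add: G_def M_def)
      have connG: "conn_on G A"
        unfolding conn_on_def
      proof (intro ballI)
        fix a b assume ab: "a \<in> G" "b \<in> G"
        have ax: "(a, x) \<in> (A \<inter> G \<times> G)\<^sup>*" using ab(1) reach by (auto simp: G_def)
        have bx: "(b, x) \<in> (A \<inter> G \<times> G)\<^sup>*" using ab(2) reach by (auto simp: G_def)
        show "(a, b) \<in> (A \<inter> G \<times> G)\<^sup>*" using ax rtr_sym_on[OF symA bx] by (rule rtrancl_trans)
      qed
      have cardG: "card G < card N"
      proof -
        have "card (Ys - {Y}) > 0" using k2 finYs Y by (simp add: Ys_def M_def)
        then obtain Y' where Y': "Y' \<in> Ys" "Y' \<noteq> Y" by (metis card_gt_0_iff DiffE ex_in_conv singletonI)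
        obtain y' where "y' \<in> Y'" using Ys_ne[OF Y'(1)] by blast
        then have "y' \<in> N" "y' \<notin> G" using Ys_disj[OF Y'(1) Y Y'(2)] Ys_sub[OF Y'(1)]
          by (auto simp: G_def M_def)
        then have "G \<subset> N" using GN by blast
        then show ?thesis by (rule psubset_card_mono[OF fin])
      qed
      have finG: "finite G" using GN fin finite_subset by blast
      have IH: "(\<Sum>y\<in>G. card (ncomps (G - {y}) A)) \<le> 2 * card G - 2"
        using less.hyps[OF cardG finG _ connG symA] by (simp add: G_def)
      have "card (ncomps (G - {x}) A) \<ge> 1"
      proof -
        have "G - {x} = Y" using xY by (simp add: G_def)
        then have "ncomps (G - {x}) A \<noteq> {}" using Ys_ne[OF Y] by (simp add: ncomps_def)
        moreover have "finite (ncomps (G - {x}) A)" using finG by (simp add: ncomps_def)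
        ultimately show ?thesis by (simp add: Suc_leI card_gt_0_iff)
      qed
      moreover have "(\<Sum>y\<in>G. card (ncomps (G - {y}) A)) = card (ncomps (G - {x}) A) + (\<Sum>y\<in>Y. card (ncomps (G - {y}) A))"
        using xY finY[OF Y] by (simp add: G_def)
      moreover have "card G = card Y + 1" using xY finY[OF Y] by (simp add: G_def)
      moreover have fle: "f y \<le> card (ncomps (G - {y}) A)" if yY: "y \<in> Y" for y
      proof -
        define N' where "N' = N - {y}"
        define G' where "G' = G - {y}"
        have G'N': "G' \<subseteq> N'" using GN by (auto simp: G'_def N'_def)
        have xG': "x \<in> G'" using yY xY by (auto simp: G'_def G_def)
        have img: "cc N' A ` N' = cc N' A ` G'"
        proof
          show "cc N' A ` G' \<subseteq> cc N' A ` N'" using G'N' by blast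
        next
          show "cc N' A ` N' \<subseteq> cc N' A ` G'"
          proof
            fix C assume "C \<in> cc N' A ` N'"
            then obtain z where z: "z \<in> N'" "C = cc N' A z" by blast
            show "C \<in> cc N' A ` G'"
            proof (cases "z \<in> G'")
              case True then show ?thesis using z by blast
            next
              case False
              then have zM: "z \<in> M" "z \<notin> Y" using z by (auto simp: N'_def G'_def G_def M_def)
              define Y'' where "Y'' = cc M A z"
              have Y''Ys: "Y'' \<in> Ys" using zM by (simp add: Y''_def Ys_def ncomps_def)
              have zY'': "z \<in> Y''" using zM by (simp add: Y''_def cc_self)
              have "Y'' \<noteq> Y" using zY'' zM by auto
              then have "y \<notin> Y''" using Ys_disj[OF Y''Ys Y] yY by auto
              then have sub'': "insert x Y'' \<subseteq> N'" using Ys_sub[OF Y''Ys] xN xG' G'N'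
                by (auto simp: N'_def M_def)
              have "(z, x) \<in> (A \<inter> insert x Y'' \<times> insert x Y'')\<^sup>*"
                using comp_reach_x[OF conn symA xN, of z z] zM by (simp add: Y''_def M_def cc_self)
              then have "(z, x) \<in> (A \<inter> N' \<times> N')\<^sup>*" using sub'' by (rule rtr_mono_set[rotated])
              then have "x \<in> cc N' A z" using xG' G'N' by (auto simp: cc_def)
              then have "cc N' A x = C" using cc_eq[OF symA] z by blast
              then show ?thesis using xG' by blast
            qed
          qed
        qed
        have finG': "finite G'" using finG by (simp add: G'_def)
        have "card (cc N' A ` G') \<le> card (cc G' A ` G')"
        proof (rule card_image_le_factor[OF finG'])
          fix a b assume ab: "a \<in> G'" "b \<in> G'" "cc G' A a = cc G' A b"
          then have "b \<in> cc G' A a" using cc_self by metis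
          then have "(a, b) \<in> (A \<inter> G' \<times> G')\<^sup>*" by (simp add: cc_def)
          then have "(a, b) \<in> (A \<inter> N' \<times> N')\<^sup>*" using G'N' by (rule rtr_mono_set[rotated])
          then have "b \<in> cc N' A a" using ab G'N' by (auto simp: cc_def)
          then show "cc N' A a = cc N' A b" using cc_eq[OF symA] by metis
        qed
        then show ?thesis using img by (simp add: f_def ncomps_def N'_def G'_def)
      qed
      then have "(\<Sum>y\<in>Y. f y) \<le> (\<Sum>y\<in>Y. card (ncomps (G - {y}) A))" by (rule sum_mono)
      ultimately show ?thesis using IH by linarith
    qed
    have sumM: "(\<Sum>y\<in>M. f y) = (\<Sum>Y\<in>Ys. \<Sum>y\<in>Y. f y)"
      using sum.Union_disjoint[of Ys f] finY Ys_disj Ys_union by (auto simp: pairwise_def disjnt_def)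
    have cardM: "card M = (\<Sum>Y\<in>Ys. card Y)"
      using card_Union_disjoint[of Ys] finY Ys_disj Ys_union by (auto simp: pairwise_def disjnt_def)
    have "(\<Sum>Y\<in>Ys. (\<Sum>y\<in>Y. f y) + 1) \<le> (\<Sum>Y\<in>Ys. 2 * card Y)" using key by (rule sum_mono)
    moreover have "(\<Sum>Y\<in>Ys. (\<Sum>y\<in>Y. f y) + 1) = (\<Sum>Y\<in>Ys. \<Sum>y\<in>Y. f y) + card Ys"
      by (subst sum.distrib) simp
    moreover have "(\<Sum>Y\<in>Ys. 2 * card Y) = 2 * card M" using cardM by (simp add: sum_distrib_left)
    ultimately have "(\<Sum>y\<in>M. f y) + card Ys \<le> 2 * card M"
      using sumM by linarith
    moreover have "(\<Sum>x\<in>N. f x) = f x + (\<Sum>y\<in>M. f y)"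
      using fin xN by (simp add: M_def sum.remove)
    moreover have "f x = card Ys" by (simp add: f_def Ys_def M_def)
    moreover have "card M = card N - 1" using fin xN by (simp add: M_def)
    moreover have "card N \<ge> 1" using fin xN by (metis One_nat_def Suc_leI card_gt_0_iff empty_iff)
    ultimately show ?thesis unfolding f_def by linarith
  qed
qed

lemma compR_self: "a \<in> compR X a" by (simp add: compR_def)
lemma compR_eq: "b \<in> compR X a \<Longrightarrow> compR X b = compR X a"
  unfolding compR_def by (auto intro: rtrancl_trans dest: rtr_sym)
lemma compR_disj:
  assumes "compR X a \<noteq> compR X b" shows "compR X a \<inter> compR X b = {}"
proof (rule ccontr)
  assume "compR X a \<inter> compR X b \<noteq> {}"
  then obtain y where y: "y \<in> compR X a" "y \<in> compR X b" by blast
  have "compR X y = compR X a" by (rule compR_eq[OF y(1)])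
  moreover have "compR X y = compR X b" by (rule compR_eq[OF y(2)])
  ultimately show False using assms by simp
qed
lemma compR_conn:
  assumes "p \<in> compR X a" "q \<in> compR X a" shows "(p, q) \<in> (adj X)\<^sup>*"
proof -
  have ap: "(a, p) \<in> (adj X)\<^sup>*" and aq: "(a, q) \<in> (adj X)\<^sup>*" using assms by (simp_all add: compR_def)
  have "(p, a) \<in> (adj X)\<^sup>*" by (rule rtr_sym[OF ap])
  then show ?thesis using aq by (rule rtrancl_trans)
qed
lemma components_eq: "components X = compR X ` verts X"
  unfolding components_def compR_def by blast

lemma avoid_path:
  assumes "(p, q) \<in> (adj X)\<^sup>*" "v \<notin> compR X p"
  shows "(p, q) \<in> (adjx X v)\<^sup>*"
  using assms(1)
proof (induction rule: rtrancl_induct)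
  case base then show ?case by simp
next
  case (step y z)
  have "y \<in> compR X p" "z \<in> compR X p" using step(1,2) by (auto simp: compR_def intro: rtrancl_into_rtrancl)
  then have "y \<noteq> v" "z \<noteq> v" using assms(2) by auto
  then have "(y, z) \<in> adjx X v" using step(2) by (simp add: adjx_def adj_def)
  then show ?case using step(3) by simp
qed

context ms begin

definition NA :: "('v set \<times> 'v set) set" where
  "NA = {(C, D). \<exists>p\<in>C. \<exists>q\<in>D. (p, q) \<in> adj (R + S)}"

lemma sym_NA: "sym NA"
proof (rule symI)
  fix C D assume "(C, D) \<in> NA"
  then obtain p q where pq: "p \<in> C" "q \<in> D" "(p, q) \<in> adj (R + S)" by (auto simp: NA_def)
  have "(q, p) \<in> adj (R + S)" by (rule adj_sym[OF pq(3)])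
  then show "(D, C) \<in> NA" unfolding NA_def using pq(1,2) by blast
qed

lemma verts_H: "verts (R + S) = verts R" using verts_S_R by auto

lemma conn_comps: "conn_on (components R) NA"
proof -
  have main: "(compR R a, compR R b) \<in> (NA \<inter> components R \<times> components R)\<^sup>*"
    if "(a, b) \<in> (adj (R + S))\<^sup>*" "a \<in> verts R" for a b
    using that(1)
  proof (induction rule: rtrancl_induct)
    case base then show ?case by simp
  next
    case (step b b')
    have "b \<in> verts (R + S)" using rtr_verts[OF step(1)] that(2) by simp
    moreover have "b' \<in> verts (R + S)" using adj_verts[OF step(2)] by simp
    ultimately have bv: "b \<in> verts R" "b' \<in> verts R" using verts_H by auto
    have "b \<in> compR R b" "b' \<in> compR R b'" by (simp_all add: compR_self)
    then have "(compR R b, compR R b') \<in> NA" unfolding NA_def using step(2) by blast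
    moreover have "compR R b \<in> components R" "compR R b' \<in> components R"
      using bv by (auto simp: components_eq)
    ultimately have e: "(compR R b, compR R b') \<in> NA \<inter> components R \<times> components R" by simp
    show ?case using step(3) e by (rule rtrancl_into_rtrancl)
  qed
  show ?thesis unfolding conn_on_def
  proof (intro ballI)
    fix C D assume "C \<in> components R" "D \<in> components R"
    then obtain a b where ab: "a \<in> verts R" "C = compR R a" "b \<in> verts R" "D = compR R b"
      by (auto simp: components_eq)
    then have "(a, b) \<in> (adj (R + S))\<^sup>*" using H_conn by (auto simp: connected_ms_def)
    then show "(C, D) \<in> (NA \<inter> components R \<times> components R)\<^sup>*" using main ab by blast
  qed
qed

lemma comp_avoid:
  assumes D: "D \<in> components R" "D \<noteq> C" and C: "C \<in> components R" "v \<in> C"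
    and pq: "p \<in> D" "q \<in> D"
  shows "(p, q) \<in> (adjx (R + S) v)\<^sup>*"
proof -
  obtain a where a: "D = compR R a" using D by (auto simp: components_eq)
  obtain c where c: "C = compR R c" using C by (auto simp: components_eq)
  have "D \<inter> C = {}" using a c D(2) compR_disj[of R a c] by simp
  then have vD: "v \<notin> D" using C(2) by blast
  have "(p, q) \<in> (adj R)\<^sup>*" using pq a compR_conn[of p R a q] by simp
  moreover have "compR R p = D" using pq(1) a compR_eq[of p R a] by simp
  ultimately have "(p, q) \<in> (adjx R v)\<^sup>*" using avoid_path[of p q R v] vD by simp
  then show ?thesis using adjx_mono[of R "R + S" v] rtrancl_mono by auto
qed

lemma lift:
  assumes "(D, D') \<in> (NA \<inter> (components R - {C}) \<times> (components R - {C}))\<^sup>*"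
    and "D \<in> components R - {C}" "C \<in> components R" "v \<in> C" "p \<in> D"
  shows "\<And>q. q \<in> D' \<Longrightarrow> (p, q) \<in> (adjx (R + S) v)\<^sup>*"
  using assms(1)
proof (induction rule: rtrancl_induct)
  case base
  then show ?case using comp_avoid[of D C v p q] assms by blast
next
  case (step D1 D2 q)
  have D12: "D1 \<in> components R - {C}" "D2 \<in> components R - {C}" using step(2) by auto
  obtain p1 q1 where pq1: "p1 \<in> D1" "q1 \<in> D2" "(p1, q1) \<in> adj (R + S)" using step(2) by (auto simp: NA_def)
  have disj: "X \<inter> C = {}" if X: "X \<in> components R - {C}" for X
  proof -
    obtain a where a: "X = compR R a" using X unfolding components_eq by blast
    obtain c where c: "C = compR R c" using assms(3) unfolding components_eq by blast
    show ?thesis using X a c compR_disj[of R a c] by auto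
  qed
  have "p1 \<noteq> v" "q1 \<noteq> v" using disj[OF D12(1)] disj[OF D12(2)] pq1 assms(4) by auto
  then have "(p1, q1) \<in> adjx (R + S) v" using pq1(3) by (simp add: adjx_def adj_def)
  moreover have "(p, p1) \<in> (adjx (R + S) v)\<^sup>*" using step(3) pq1(1) by blast
  moreover have "(q1, q) \<in> (adjx (R + S) v)\<^sup>*" using comp_avoid[of D2 C v q1 q] D12(2) assms(3,4) pq1(2) step(4) by blast
  ultimately show ?case by (meson rtrancl_into_rtrancl rtrancl_trans)
qed

theorem upper: "card (bal_touched R S) \<le> 2 * card (components R) - 2"
proof -
  let ?N = "components R"
  let ?T = "bal_touched R S"
  define nb where "nb v = (SOME u. Upair v u \<in># S)" for v
  define \<phi> where "\<phi> v = (compR R v, cc (?N - {compR R v}) NA (compR R (nb v)))" for v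
  have finN: "finite ?N" by (simp add: components_eq)
  have neN: "?N \<noteq> {}"
  proof -
    have "R \<noteq> {#}" using rpp by (simp add: is_rpp_def)
    then obtain e where "e \<in># R" by blast
    obtain a b where "e = Upair a b" by (cases e)
    then have "a \<in> verts R" using \<open>e \<in># R\<close> unfolding in_verts by force
    then show ?thesis by (auto simp: components_eq)
  qed
  have Tfacts: "v \<in> verts R" "v \<in> verts S" "Upair v (nb v) \<in># S" if "v \<in> ?T" for v
  proof -
    show "v \<in> verts R" "v \<in> verts S" using that by (auto simp: bal_touched_def)
    then have "\<exists>u. Upair v u \<in># S" using get_edge[of v S] by blast
    then show "Upair v (nb v) \<in># S" unfolding nb_def by (rule someI_ex)
  qed
  have nbR: "nb v \<in> verts R" if "v \<in> ?T" for v
  proof -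
    have "nb v \<in> verts S" using Tfacts(3)[OF that] unfolding in_verts by force
    then show ?thesis using verts_S_R by blast
  qed
  have nb_ne: "compR R (nb v) \<noteq> compR R v" if "v \<in> ?T" for v
  proof
    assume eq: "compR R (nb v) = compR R v"
    have "nb v \<in> {y. (nb v, y) \<in> (adjx (R + S) v)\<^sup>*}" by simp
    moreover have "nb v \<in> compR R v" using compR_self eq by metis
    ultimately show False using T_lemma[OF that Tfacts(3)[OF that]] by blast
  qed
  have maps: "\<phi> ` ?T \<subseteq> (SIGMA C:?N. ncomps (?N - {C}) NA)"
  proof
    fix p assume "p \<in> \<phi> ` ?T"
    then obtain v where v: "v \<in> ?T" "p = \<phi> v" by blast
    have "compR R v \<in> ?N" using Tfacts(1)[OF v(1)] by (simp add: components_eq)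
    moreover have "compR R (nb v) \<in> ?N - {compR R v}" using nbR[OF v(1)] nb_ne[OF v(1)]
      by (simp add: components_eq)
    ultimately show "p \<in> (SIGMA C:?N. ncomps (?N - {C}) NA)" using v(2)
      by (auto simp: \<phi>_def ncomps_def)
  qed
  have inj: "inj_on \<phi> ?T"
  proof (rule inj_onI)
    fix v v' assume v: "v \<in> ?T" and v': "v' \<in> ?T" and eq: "\<phi> v = \<phi> v'"
    show "v = v'"
    proof (rule ccontr)
      assume ne: "v \<noteq> v'"
      define C where "C = compR R v"
      have CC: "compR R v' = C" using eq by (simp add: \<phi>_def C_def)
      have ccq: "cc (?N - {C}) NA (compR R (nb v)) = cc (?N - {C}) NA (compR R (nb v'))"
        using eq CC by (simp add: \<phi>_def C_def)
      have CN: "C \<in> ?N" using Tfacts(1)[OF v] by (simp add: C_def components_eq)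
      have D: "compR R (nb v) \<in> ?N - {C}" using nbR[OF v] nb_ne[OF v] by (simp add: C_def components_eq)
      have D': "compR R (nb v') \<in> ?N - {C}" using nbR[OF v'] nb_ne[OF v'] CC by (simp add: components_eq)
      have "compR R (nb v') \<in> cc (?N - {C}) NA (compR R (nb v'))" using D' by (rule cc_self)
      then have "compR R (nb v') \<in> cc (?N - {C}) NA (compR R (nb v))" using ccq by simp
      then have path: "(compR R (nb v), compR R (nb v')) \<in> (NA \<inter> (?N - {C}) \<times> (?N - {C}))\<^sup>*"
        by (simp add: cc_def)
      have vC: "v \<in> C" by (simp add: C_def compR_self)
      have r1: "(nb v, nb v') \<in> (adjx (R + S) v)\<^sup>*"
        by (rule lift[OF path D CN vC compR_self[of "nb v" R] compR_self[of "nb v'" R]])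
      have "nb v' \<noteq> v"
      proof
        assume "nb v' = v"
        then have "compR R (nb v') = C" by (simp add: C_def)
        then show False using D' by simp
      qed
      moreover have "Upair (nb v') v' \<in># S" using Tfacts(3)[OF v'] Upair_comm[of "nb v'" v'] by argo
      then have "Upair (nb v') v' \<in># R + S" by simp
      ultimately have "(nb v', v') \<in> adjx (R + S) v" using ne by (simp add: adjx_def)
      with r1 have "v' \<in> {y. (nb v, y) \<in> (adjx (R + S) v)\<^sup>*}" by simp
      moreover have "v' \<in> compR R v" using CC C_def compR_self[of v' R] by simp
      ultimately show False using T_lemma[OF v Tfacts(3)[OF v]] by blast
    qed
  qed
  have finT: "finite ?T" by (rule finite_subset[of _ "verts R"]) (auto simp: bal_touched_def)
  have "card ?T = card (\<phi> ` ?T)" using inj by (simp add: card_image)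
  also have "\<dots> \<le> card (SIGMA C:?N. ncomps (?N - {C}) NA)"
  proof (rule card_mono[OF _ maps])
    show "finite (SIGMA C:?N. ncomps (?N - {C}) NA)" using finN by (auto simp: ncomps_def)
  qed
  also have "\<dots> = (\<Sum>C\<in>?N. card (ncomps (?N - {C}) NA))"
    using finN by (intro card_SigmaI) (auto simp: ncomps_def)
  also have "\<dots> \<le> 2 * card ?N - 2"
    by (rule sum_cut_comps[OF finN neN conn_comps sym_NA])
  finally show ?thesis .
qed

end

definition dbl :: "(nat \<Rightarrow> 'v uprod) \<Rightarrow> nat \<Rightarrow> 'v uprod multiset" where
  "dbl g n = (\<Sum>i<n. {#g i, g i#})"

lemma dbl_0[simp]: "dbl g 0 = {#}" by (simp add: dbl_def)
lemma dbl_Suc[simp]: "dbl g (Suc n) = add_mset (g n) (add_mset (g n) (dbl g n))"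
  by (simp add: dbl_def)

lemma mem_dbl: "e \<in># dbl g n \<longleftrightarrow> (\<exists>i<n. e = g i)"
  by (induction n) (auto simp: less_Suc_eq)

lemma even_deg_dbl: "even (deg (dbl g n) y)"
  by (induction n) auto

lemma size_dbl: "size (dbl g n) = 2 * n"
  by (induction n) auto

lemma wt_dbl: "wt \<omega> (dbl g n) = 2 * (\<Sum>i<n. \<omega> (g i))"
  by (induction n) auto

lemma verts_dbl: "verts (dbl g n) = (\<Union>i<n. set_uprod (g i))"
  by (induction n) (auto simp: lessThan_Suc)

definition Vt :: "nat \<Rightarrow> nat set" where "Vt c = {x. x < 3 * c \<and> x mod 3 \<noteq> 2}"
definition Et :: "nat \<Rightarrow> nat uprod set" where
  "Et c = {e. \<exists>a b. e = Upair a b \<and> a \<in> Vt c \<and> b \<in> Vt c \<and> a \<noteq> b}"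
definition wt_t :: "nat uprod \<Rightarrow> nat" where "wt_t e = Max (set_uprod e) - Min (set_uprod e)"
definition gR :: "nat \<Rightarrow> nat uprod" where "gR i = Upair (3 * i) (3 * i + 1)"
definition gS :: "nat \<Rightarrow> nat uprod" where "gS i = Upair (3 * i + 1) (3 * i + 3)"
definition Rt :: "nat \<Rightarrow> nat uprod multiset" where "Rt c = dbl gR c"
definition St :: "nat \<Rightarrow> nat uprod multiset" where "St c = dbl gS (c - 1)"

lemma wt_t_Upair: "wt_t (Upair a b) = (if a \<le> b then b - a else a - b)"
  by (simp add: wt_t_def max_def min_def)

lemma rpp_t: "c \<ge> 1 \<Longrightarrow> is_rpp (Vt c) (Et c) (Rt c)"
  unfolding is_rpp_def
proof (intro conjI)
  assume c: "c \<ge> 1"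
  show "finite (Vt c)" by (simp add: Vt_def)
  show "\<forall>e\<in>Et c. set_uprod e \<subseteq> Vt c" by (auto simp: Et_def)
  have "gR 0 \<in># Rt c" unfolding Rt_def mem_dbl using c by (intro exI[of _ 0]) auto
  then show "Rt c \<noteq> {#}" by auto
  show "set_mset (Rt c) \<subseteq> Et c"
  proof
    fix e assume "e \<in># Rt c"
    then obtain i where i: "i < c" "e = gR i" by (auto simp: Rt_def mem_dbl)
    have "3*i \<in> Vt c" "3*i+1 \<in> Vt c" unfolding Vt_def using i(1) by auto
    moreover have "3*i \<noteq> 3*i+1" by simp
    ultimately show "e \<in> Et c" unfolding Et_def using i(2) gR_def by blast
  qed
qed

lemma metric_t: "is_metric (Vt c) (Et c) wt_t"
  unfolding is_metric_def
proof (intro conjI ballI impI)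
  fix u v assume "u \<in> Vt c" "v \<in> Vt c" "u \<noteq> v"
  then show "Upair u v \<in> Et c" by (auto simp: Et_def)
next
  fix u v w :: nat
  show "wt_t (Upair u w) \<le> wt_t (Upair u v) + wt_t (Upair v w)"
    by (simp add: wt_t_Upair; arith)
qed

lemma mem_Rt: "e \<in># Rt c \<longleftrightarrow> (\<exists>i<c. e = Upair (3*i) (3*i+1))"
  by (simp add: Rt_def mem_dbl gR_def)
lemma mem_St: "e \<in># St c \<longleftrightarrow> (\<exists>i<c-1. e = Upair (3*i+1) (3*i+3))"
  by (simp add: St_def mem_dbl gS_def)

lemma adj_Rt: "(a, b) \<in> adj (Rt c) \<longleftrightarrow> (\<exists>i<c. (a = 3*i \<and> b = 3*i+1) \<or> (a = 3*i+1 \<and> b = 3*i))"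
  by (auto simp: adj_def mem_Rt)

lemma verts_Rt: "verts (Rt c) = Vt c"
proof -
  have "verts (Rt c) = (\<Union>i<c. {3*i, 3*i+1})" by (simp add: Rt_def verts_dbl gR_def)
  also have "\<dots> = Vt c"
  proof
    show "(\<Union>i<c. {3*i, 3*i+1}) \<subseteq> Vt c" by (auto simp: Vt_def)
  next
    show "Vt c \<subseteq> (\<Union>i<c. {3*i, 3*i+1})"
    proof
      fix x assume "x \<in> Vt c"
      then have x: "x < 3*c" "x mod 3 \<noteq> 2" by (auto simp: Vt_def)
      then have "x div 3 < c" "x = 3*(x div 3) \<or> x = 3*(x div 3) + 1" by presburger+
      then show "x \<in> (\<Union>i<c. {3*i, 3*i+1})" by blast
    qed
  qed
  finally show ?thesis .
qed

lemma verts_St: "verts (St c) = (\<lambda>i. 3*i+1) ` {..<c-1} \<union> (\<lambda>i. 3*i+3) ` {..<c-1}"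
  by (auto simp: St_def verts_dbl gS_def)

lemma verts_St_sub: "verts (St c) \<subseteq> verts (Rt c)"
  unfolding verts_St verts_Rt Vt_def by auto

lemma comp_Rt:
  assumes a: "a \<in> verts (Rt c)"
  shows "compR (Rt c) a = {3*(a div 3), 3*(a div 3)+1}"
proof -
  define q where "q = a div 3"
  have a': "a < 3*c" "a mod 3 \<noteq> 2" using a by (auto simp: verts_Rt Vt_def)
  then have aq: "a = 3*q \<or> a = 3*q+1" "q < c" unfolding q_def by presburger+
  have sub: "b \<in> {3*q, 3*q+1}" if "(a, b) \<in> (adj (Rt c))\<^sup>*" for b
    using that
  proof (induction rule: rtrancl_induct)
    case base then show ?case using aq by auto
  next
    case (step y z)
    then obtain i where "i < c" "(y = 3*i \<and> z = 3*i+1) \<or> (y = 3*i+1 \<and> z = 3*i)"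
      by (auto simp: adj_Rt)
    then show ?case using step(3) by (auto; presburger)
  qed
  have e1: "(3*q, 3*q+1) \<in> adj (Rt c)" "(3*q+1, 3*q) \<in> adj (Rt c)"
    using aq(2) by (auto simp: adj_Rt)
  have "(a, 3*q) \<in> (adj (Rt c))\<^sup>*" "(a, 3*q+1) \<in> (adj (Rt c))\<^sup>*" using aq(1) e1 by auto
  then show ?thesis using sub unfolding compR_def q_def[symmetric] by auto
qed

lemma components_Rt: "components (Rt c) = (\<lambda>q. {3*q, 3*q+1}) ` {..<c}"
proof -
  have "components (Rt c) = compR (Rt c) ` verts (Rt c)" by (rule components_eq)
  also have "\<dots> = (\<lambda>q. {3*q, 3*q+1}) ` {..<c}"
  proof
    show "compR (Rt c) ` verts (Rt c) \<subseteq> (\<lambda>q. {3*q, 3*q+1}) ` {..<c}"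
    proof
      fix C assume "C \<in> compR (Rt c) ` verts (Rt c)"
      then obtain a where a: "a \<in> verts (Rt c)" "C = compR (Rt c) a" by blast
      then have "a div 3 < c" by (auto simp: verts_Rt Vt_def)
      then show "C \<in> (\<lambda>q. {3*q, 3*q+1}) ` {..<c}" using comp_Rt[OF a(1)] a(2) by auto
    qed
  next
    show "(\<lambda>q. {3*q, 3*q+1}) ` {..<c} \<subseteq> compR (Rt c) ` verts (Rt c)"
    proof
      fix C assume "C \<in> (\<lambda>q. {3*q, 3*q+1}) ` {..<c}"
      then obtain q where q: "q < c" "C = {3*q, 3*q+1}" by blast
      have qv: "3*q \<in> verts (Rt c)" using q(1) by (auto simp: verts_Rt Vt_def)
      moreover have "compR (Rt c) (3*q) = C" using comp_Rt[OF qv] q(2) by simp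
      ultimately show "C \<in> compR (Rt c) ` verts (Rt c)" by blast
    qed
  qed
  finally show ?thesis .
qed

lemma card_components_Rt: "card (components (Rt c)) = c"
proof -
  have "inj_on (\<lambda>q::nat. {3*q, 3*q+1}) {..<c}"
  proof (rule inj_onI)
    fix x y :: nat assume "{3*x, 3*x+1} = {3*y, 3*y+1}"
    then have "3*x \<in> {3*y, 3*y+1}" by blast
    then show "x = y" by auto
  qed
  then show ?thesis by (simp add: components_Rt card_image)
qed

lemma even_Rt_St: "even (deg (Rt c) y)" "even (deg (St c) y)"
  by (simp_all add: Rt_def St_def even_deg_dbl)

lemma conn_RS: "connected_ms (Rt c + St c)"
proof (rule connected_via[where r = 0])
  have reach3: "(3*q, 0) \<in> (adj (Rt c + St c))\<^sup>*" if "q < c" for q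
    using that
  proof (induction q)
    case 0 then show ?case by simp
  next
    case (Suc q)
    have "Upair (3*q+1) (3 * Suc q) \<in># St c" unfolding mem_St using Suc.prems by (intro exI[of _ q]) auto
    then have "(3*q+1, 3 * Suc q) \<in> adj (Rt c + St c)" unfolding adj_iff by simp
    then have "(3 * Suc q, 3*q+1) \<in> adj (Rt c + St c)" by (rule adj_sym)
    moreover have "(3*q+1, 3*q) \<in> adj (Rt c)" unfolding adj_Rt using Suc.prems by (intro exI[of _ q]) auto
    then have "(3*q+1, 3*q) \<in> adj (Rt c + St c)" using adj_mono[of "Rt c" "Rt c + St c"] by auto
    moreover have "(3*q, 0) \<in> (adj (Rt c + St c))\<^sup>*" using Suc by simp
    ultimately show ?case by (meson converse_rtrancl_into_rtrancl)
  qed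
  fix y assume "y \<in> verts (Rt c + St c)"
  then have "y \<in> Vt c" using verts_St_sub verts_Rt by auto
  then have y0: "y < 3*c" "y mod 3 \<noteq> 2" by (auto simp: Vt_def)
  then have y: "y div 3 < c" "y = 3*(y div 3) \<or> y = 3*(y div 3)+1" by presburger+
  have "(3*(y div 3)+1, 3*(y div 3)) \<in> adj (Rt c)" unfolding adj_Rt using y(1) by (intro exI[of _ "y div 3"]) auto
  then have "(3*(y div 3)+1, 3*(y div 3)) \<in> adj (Rt c + St c)"
    using adj_mono[of "Rt c" "Rt c + St c"] by auto
  then show "(y, 0) \<in> (adj (Rt c + St c))\<^sup>*" using y reach3[OF y(1)]
    by (metis converse_rtrancl_into_rtrancl)
qed

lemma eulext_t: "eulerian_ext (Et c) (Rt c) (St c)"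
  unfolding eulerian_ext_def eulerian_def balanced_def
proof (intro conjI ballI)
  show "set_mset (St c) \<subseteq> Et c"
  proof
    fix e assume "e \<in># St c"
    then obtain i where i: "i < c - 1" "e = Upair (3*i+1) (3*i+3)" by (auto simp: mem_St)
    have "3*i+1 \<in> Vt c" "3*i+3 \<in> Vt c" unfolding Vt_def using i(1) by auto
    moreover have "3*i+1 \<noteq> 3*i+3" by simp
    ultimately show "e \<in> Et c" unfolding Et_def using i(2) by blast
  qed
  show "connected_ms (Rt c + St c)" by (rule conn_RS)
  fix v show "even (deg (Rt c + St c) v)" using even_Rt_St by simp
qed

lemma bal_touched_t: "card (bal_touched (Rt c) (St c)) = 2 * c - 2"
proof -
  have "bal_touched (Rt c) (St c) = verts (St c)"
    using verts_St_sub even_Rt_St by (auto simp: bal_touched_def balanced_def)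
  moreover have "card (verts (St c)) = 2 * (c - 1)"
  proof -
    have d: "(\<lambda>i. 3*i+1) ` {..<c-1} \<inter> (\<lambda>i::nat. 3*i+3) ` {..<c-1} = {}" by auto presburger
    have "inj_on (\<lambda>i::nat. 3*i+1) {..<c-1}" "inj_on (\<lambda>i::nat. 3*i+3) {..<c-1}" by (auto simp: inj_on_def)
    then show ?thesis unfolding verts_St using d by (simp add: card_Un_disjoint card_image)
  qed
  ultimately show ?thesis by simp
qed

lemma swap_count:
  assumes "finite J"
  shows "(\<Sum>j\<in>J. size (filter_mset (P j) X)) = (\<Sum>e\<in>#X. card {j\<in>J. P j e})"
proof (induction X)
  case empty then show ?case by simp
next
  case (add e X)
  have "(\<Sum>j\<in>J. size (filter_mset (P j) (add_mset e X)))
      = (\<Sum>j\<in>J. (if P j e then 1 else 0) + size (filter_mset (P j) X))"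
    by (intro sum.cong) auto
  also have "\<dots> = (\<Sum>j\<in>J. if P j e then 1 else 0) + (\<Sum>j\<in>J. size (filter_mset (P j) X))"
    by (rule sum.distrib)
  also have "(\<Sum>j\<in>J. if P j e then 1 else (0::nat)) = card {j\<in>J. P j e}"
    using assms by (simp add: sum.inter_filter[symmetric])
  finally show ?case using add.IH by simp
qed

lemma path_cross:
  assumes "(a, b) \<in> (adj X)\<^sup>*" "a \<in> K" "b \<notin> K"
  shows "\<exists>e\<in>#X. crossing K e"
  using assms(1,3)
proof (induction rule: rtrancl_induct)
  case base then show ?case using assms(2) by simp
next
  case (step y z)
  show ?case
  proof (cases "y \<in> K")
    case True
    have "Upair y z \<in># X" using step(2) by (simp add: adj_def)
    moreover have "crossing K (Upair y z)" using True step(4) by (auto simp: crossing_def)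
    ultimately show ?thesis by blast
  next
    case False then show ?thesis using step(3) by blast
  qed
qed

lemma edge_cut_bound_le:
  assumes "a \<in> Vt c" "b \<in> Vt c" "a \<le> b"
  shows "3 * card {j \<in> {..<n}. crossing {..3*j+1} (Upair a b)} \<le> wt_t (Upair a b) + 1"
proof -
  have am: "a mod 3 \<noteq> 2" and bm: "b mod 3 \<noteq> 2" using assms by (auto simp: Vt_def)
  have sub: "{j \<in> {..<n}. crossing {..3*j+1} (Upair a b)} \<subseteq> {a div 3..<b div 3}"
  proof
    fix j assume "j \<in> {j \<in> {..<n}. crossing {..3*j+1} (Upair a b)}"
    then have cr: "crossing {..3*j+1} (Upair a b)" by simp
    then have ab: "a \<le> 3*j+1" "3*j+1 < b" using assms(3) by (auto simp: crossing_def)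
    have "a div 3 \<le> (3*j+1) div 3" using ab(1) by (rule div_le_mono)
    then have 1: "a div 3 \<le> j" by simp
    have bd: "b = 3 * (b div 3) + b mod 3" by simp
    have "b mod 3 \<le> 1" using bm by linarith
    then have 2: "j < b div 3" using ab(2) bd by linarith
    show "j \<in> {a div 3..<b div 3}" using 1 2 by simp
  qed
  have "card {j \<in> {..<n}. crossing {..3*j+1} (Upair a b)} \<le> b div 3 - a div 3"
    using card_mono[OF _ sub] by simp
  moreover have "3 * (b div 3 - a div 3) \<le> b - a + 1"
  proof -
    have ad: "a = 3 * (a div 3) + a mod 3" and bd: "b = 3 * (b div 3) + b mod 3" by simp_all
    have "a mod 3 \<le> 1" using am by linarith
    moreover have "a div 3 \<le> b div 3" using assms(3) by (rule div_le_mono)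
    ultimately show ?thesis using ad bd assms(3) by linarith
  qed
  moreover have "wt_t (Upair a b) = b - a" using assms(3) by (simp add: wt_t_Upair)
  ultimately show ?thesis by linarith
qed

lemma edge_cut_bound:
  assumes "e \<in> Et c"
  shows "3 * card {j \<in> {..<n}. crossing {..3*j+1} e} \<le> wt_t e + 1"
proof -
  obtain a b where ab: "e = Upair a b" "a \<in> Vt c" "b \<in> Vt c" using assms by (auto simp: Et_def)
  show ?thesis
  proof (cases "a \<le> b")
    case True then show ?thesis using edge_cut_bound_le[OF ab(2,3)] ab(1) by simp
  next
    case False
    then have "b \<le> a" by simp
    then show ?thesis using edge_cut_bound_le[OF ab(3,2)] ab(1) Upair_comm[of a b] by simp
  qed
qed

lemma sum_mset_plus1: "(\<Sum>e\<in>#X. f e + 1) = (\<Sum>e\<in>#X. f e) + size X"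
  by (induction X) auto
lemma sum_mset_Suc: "(\<Sum>e\<in>#X. Suc (f e)) = (\<Sum>e\<in>#X. f e) + size X"
  by (induction X) auto
lemma sum_mset_times3: "(\<Sum>e\<in>#X. 3 * f e) = 3 * (\<Sum>e\<in>#X. (f e :: nat))"
  by (induction X) auto

lemma lower_t:
  assumes c: "c \<ge> 1" and ext: "eulerian_ext (Et c) (Rt c) S'"
    and sz: "size S' < size (St c)" and w: "wt wt_t S' \<le> wt wt_t (St c)"
  shows False
proof -
  have SE: "set_mset S' \<subseteq> Et c" and eul: "eulerian (Rt c + S')"
    using ext by (auto simp: eulerian_ext_def)
  have evH: "even (deg (Rt c + S') y)" for y
  proof (cases "y \<in> verts (Rt c + S')")
    case True then show ?thesis using eul by (simp add: eulerian_def balanced_def)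
  next
    case False then have "deg (Rt c + S') y = 0" by (simp add: deg_pos_iff[symmetric])
    then show ?thesis by simp
  qed
  define Kj where "Kj j = {..3*j+1}" for j :: nat
  have cr2: "2 \<le> size (filter_mset (crossing (Kj j)) S')" if j: "j < c - 1" for j
  proof -
    have finK: "finite (Kj j)" by (simp add: Kj_def)
    have "even (\<Sum>y\<in>Kj j. deg (Rt c + S') y)" using evH by (rule sum_even)
    then have ev: "even (size (filter_mset (crossing (Kj j)) (Rt c + S')))"
      using parity[OF finK, of "Rt c + S'"] by (simp add: even_iff_mod_2_eq_zero)
    have noR: "\<not> crossing (Kj j) e" if eR: "e \<in># Rt c" for e
    proof -
      obtain i where "e = Upair (3*i) (3*i+1)" using eR unfolding mem_Rt by blast
      then show ?thesis by (auto simp: crossing_def Kj_def)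
    qed
    then have fR: "filter_mset (crossing (Kj j)) (Rt c) = {#}" by (simp add: filter_mset_eq_mempty_iff)
    have eqF: "filter_mset (crossing (Kj j)) (Rt c + S') = filter_mset (crossing (Kj j)) S'"
      by (simp only: filter_union_mset fR) simp
    have ev2: "even (size (filter_mset (crossing (Kj j)) S'))" using ev unfolding eqF .
    have "0 \<in> verts (Rt c)" "3*(j+1) \<in> verts (Rt c)" using c j by (auto simp: verts_Rt Vt_def)
    then have "(0, 3*(j+1)) \<in> (adj (Rt c + S'))\<^sup>*" using eul by (auto simp: eulerian_def connected_ms_def)
    moreover have "0 \<in> Kj j" "3*(j+1) \<notin> Kj j" by (auto simp: Kj_def)
    ultimately obtain e where e: "e \<in># Rt c + S'" "crossing (Kj j) e" using path_cross by metis
    then have "e \<in># S'" using noR by auto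
    then have "size (filter_mset (crossing (Kj j)) S') > 0" using e(2)
      by (metis filter_mset_eq_mempty_iff neq0_conv size_eq_0_iff_empty)
    moreover have "size (filter_mset (crossing (Kj j)) S') \<noteq> 1" using ev2 by auto
    ultimately show ?thesis by linarith
  qed
  have "(\<Sum>j<c-1. 2) \<le> (\<Sum>j<c-1. size (filter_mset (crossing (Kj j)) S'))"
    using cr2 by (intro sum_mono) simp
  also have "\<dots> = (\<Sum>e\<in>#S'. card {j\<in>{..<c-1}. crossing (Kj j) e})"
    by (rule swap_count) simp
  finally have A: "2 * (c - 1) \<le> (\<Sum>e\<in>#S'. card {j\<in>{..<c-1}. crossing (Kj j) e})" by simp
  have "(\<Sum>e\<in>#S'. 3 * card {j\<in>{..<c-1}. crossing (Kj j) e}) \<le> (\<Sum>e\<in>#S'. wt_t e + 1)"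
  proof (rule sum_mset_mono)
    fix e assume "e \<in># S'"
    then have "e \<in> Et c" using SE by blast
    then show "3 * card {j\<in>{..<c-1}. crossing (Kj j) e} \<le> wt_t e + 1"
      unfolding Kj_def by (rule edge_cut_bound)
  qed
  then have B: "3 * (\<Sum>e\<in>#S'. card {j\<in>{..<c-1}. crossing (Kj j) e}) \<le> wt wt_t S' + size S'"
    by (simp add: sum_mset_times3 sum_mset_Suc wt_def)
  have sS: "size (St c) = 2 * (c - 1)" by (simp add: St_def size_dbl)
  have wS: "wt wt_t (St c) = 4 * (c - 1)" by (simp add: St_def wt_dbl gS_def wt_t_Upair)
  show False using A B sz w sS wS by linarith
qed

theorem tight:
  assumes c: "c \<ge> 1"
  shows "is_rpp (Vt c) (Et c) (Rt c) \<and> is_metric (Vt c) (Et c) wt_t \<and> card (components (Rt c)) = c \<and>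
         edge_min_ext (Et c) wt_t (Rt c) (St c) \<and> card (bal_touched (Rt c) (St c)) = 2 * c - 2"
  using rpp_t[OF c] metric_t card_components_Rt eulext_t lower_t[OF c] bal_touched_t
  by (auto simp: edge_min_ext_def)

theorem mainTheorem6:
  shows "(\<forall>(V :: 'v set) E \<omega> R S.
            is_rpp V E R \<and> is_metric V E \<omega> \<and> edge_min_ext E \<omega> R S \<longrightarrow>
            card (bal_touched R S) \<le> 2 * card (components R) - 2)
       \<and> (\<forall>c::nat. c \<ge> 1 \<longrightarrow>
            (\<exists>(V :: nat set) E \<omega> R S.
               is_rpp V E R \<and> is_metric V E \<omega> \<and> card (components R) = c \<and>
               edge_min_ext E \<omega> R S \<and> card (bal_touched R S) = 2 * c - 2))"
proof (intro conjI allI impI)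
  fix V :: "'v set" and E \<omega> R S
  assume a: "is_rpp V E R \<and> is_metric V E \<omega> \<and> edge_min_ext E \<omega> R S"
  interpret ms V E \<omega> R S using a by unfold_locales auto
  show "card (bal_touched R S) \<le> 2 * card (components R) - 2" by (rule upper)
next
  fix c :: nat assume c: "c \<ge> 1"
  show "\<exists>(V :: nat set) E \<omega> R S.
               is_rpp V E R \<and> is_metric V E \<omega> \<and> card (components R) = c \<and>
               edge_min_ext E \<omega> R S \<and> card (bal_touched R S) = 2 * c - 2"
    using tight[OF c] by blast
qed

end
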